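(* Assume (A2) and (A3). Then for every stage $l\ge1$ of Method (BCV), the number of inner iterations (changes of the index $k$) is finite, i.e. after finitely many steps Step 1 finds no admissible pair and the stage ends with $z^l=x^k$.
   Context: Setting: limit problem $\min_{x\in D}f(x)$ with $D=\{x\in X:\langle a,x\rangle=\beta\}$, $X=\prod_{i=1}^n[\alpha'_i,\alpha''_i]$. Approximating problems $\min_{x\in D_l}f_l(x)$, $l=0,1,2,\dots$, with $D_l=\{x\in X_l:\langle a^l,x\rangle=\beta_l\}$, $X_l=\prod_{i=1}^n[\alpha'_{il},\alpha''_{il}]$, $a^l=(a_{1l},\dots,a_{nl})^\top$. (A2): for each $l$, $D_l\neq\varnothing$, $a_{il}>0$ and $-\infty<\alpha'_{il}<\alpha''_{il}<+\infty$ for all $i$; and $\alpha'_{il}\to\alpha'_i$, $\alpha''_{il}\to\alpha''_i$, $a^l\to a$, $\beta_l\to\beta$ as $l\to\infty$. (A3): each $f_l$ is continuously differentiable on (a neighborhood of) $X_l$, and whenever $y^l\in D_l$ and $y^l\to\bar y$, the gradients satisfy $\nabla f_l(y^l)\to\bar g$ for some $\bar g\in\partial^{\uparrow}f(\bar y)$ (Clarke generalized gradient). Notation: $g_{il}(x)=\partial f_l(x)/\partial x_i$, $h_{il}(x)=g_{il}(x)/a_{il}$; given positive sequence $\{\varepsilon_l\}$, $I_l^-(x)=\{i\in I: x_i\ge\alpha'_{il}+\varepsilon_l/a_{il}\}$, $I_l^+(x)=\{i\in I: x_i\le\alpha''_{il}-\varepsilon_l/a_{il}\}$, where $I=\{1,\dots,n\}$;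 $\pi_V$ is Euclidean projection onto $V$. Method (BCV): choose $z^0\in D_0$, $\sigma\in(0,1)$, $\theta\in(0,1)$, positive sequences $\delta_l\searrow0$, $\varepsilon_l\searrow0$; set $l=1$. Stage $l$: set $k=0$, $x^0=\pi_{D_l}(z^{l-1})$. Step 1: if there exist $i\in I_l^-(x^k)$, $j\in I_l^+(x^k)$ with $h_{il}(x^k)-h_{jl}(x^k)\ge\delta_l$, choose any such pair, set $i_k=i$, $j_k=j$, $\gamma_k=\min\{a_{il}(x^k_i-\alpha'_{il}),\,a_{jl}(\alpha''_{jl}-x^k_j)\}$ and go to Step 2; otherwise set $z^l=x^k$, $l:=l+1$ and start the next stage. Step 2: define $d^k$ by $d^k_i=-1/a_{il}$, $d^k_j=1/a_{jl}$, $d^k_s=0$ for $s\ne i,j$; let $m$ be the smallest nonnegative integer with $f_l(x^k+\theta^m\gamma_kd^k)\le f_l(x^k)+\sigma\theta^m\gamma_k\langle\nabla f_l(x^k),d^k\rangle$; set $\lambda_k=\theta^m\gamma_k$, $x^{k+1}=x^k+\lambda_kd^k$, $k:=k+1$, and return to Step 1. *)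

theory Defs
  imports "HOL-Analysis.Analysis"
begin

text \<open>Vectors in R^n are modelled as real^'n; the index set I = {1..n} is UNIV :: 'n set.\<close>

definition feas_set :: "real^'n \<Rightarrow> real^'n \<Rightarrow> real^'n \<Rightarrow> real \<Rightarrow> (real^'n) set" where
  "feas_set lo up a b = {x. (\<forall>i. lo $ i \<le> x $ i \<and> x $ i \<le> up $ i) \<and> a \<bullet> x = b}"

definition box_set :: "real^'n \<Rightarrow> real^'n \<Rightarrow> (real^'n) set" where
  "box_set lo up = {x. \<forall>i. lo $ i \<le> x $ i \<and> x $ i \<le> up $ i}"

definition grad :: "(real^'n \<Rightarrow> real) \<Rightarrow> real^'n \<Rightarrow> real^'n" where
  "grad F x = (\<chi> i. frechet_derivative F (at x) (axis i 1))"

definition clarke_dir :: "(real^'n \<Rightarrow> real) \<Rightarrow> real^'n \<Rightarrow> real^'n \<Rightarrow> ereal" where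
  "clarke_dir F x v =
     Limsup (at (x, 0) within (UNIV \<times> {0<..}))
       (\<lambda>(y, t). ereal ((F (y + t *\<^sub>R v) - F y) / t))"

definition clarke_grad :: "(real^'n \<Rightarrow> real) \<Rightarrow> real^'n \<Rightarrow> (real^'n) set" where
  "clarke_grad F x = {g. \<forall>v. ereal (g \<bullet> v) \<le> clarke_dir F x v}"

definition bcv_step ::
  "(real^'n \<Rightarrow> real) \<Rightarrow> real^'n \<Rightarrow> real^'n \<Rightarrow> real^'n \<Rightarrow> real \<Rightarrow> real \<Rightarrow> real \<Rightarrow> real
   \<Rightarrow> real^'n \<Rightarrow> real^'n \<Rightarrow> bool" where
  "bcv_step F lo up a del eps sig th x x' \<longleftrightarrow>
     (\<exists>i j.
        x $ i \<ge> lo $ i + eps / a $ i \<and>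
        x $ j \<le> up $ j - eps / a $ j \<and>
        grad F x $ i / a $ i - grad F x $ j / a $ j \<ge> del \<and>
        (let \<gamma> = min (a $ i * (x $ i - lo $ i)) (a $ j * (up $ j - x $ j));
             d = (\<chi> s. if s = i then - 1 / a $ i else if s = j then 1 / a $ j else 0);
             m = (LEAST m::nat. F (x + (th ^ m * \<gamma>) *\<^sub>R d)
                     \<le> F x + sig * th ^ m * \<gamma> * (grad F x \<bullet> d))
         in x' = x + (th ^ m * \<gamma>) *\<^sub>R d))"

end

theory Submission
  imports Defs
begin


lemma box_set_cbox: "box_set lo up = cbox lo (up::real^'n)"
  by (auto simp: box_set_def mem_box_cart)

lemma feas_closed: "closed (feas_set lo up a b)"
proof -
  have "feas_set lo up a b = cbox lo up \<inter> {x. inner a x = b}"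
    by (auto simp: feas_set_def mem_box_cart)
  thus ?thesis by (metis closed_Int closed_cbox closed_hyperplane)
qed

lemma feas_sub: "feas_set lo up a b \<subseteq> cbox lo up"
  by (auto simp: feas_set_def mem_box_cart)

lemma d_eq: "i \<noteq> j \<Longrightarrow> (\<chi> s. if s = i then - 1 / a $ i else if s = j then 1 / a $ j else 0)
   = (- 1 / a$i) *\<^sub>R axis i 1 + (1/a$j) *\<^sub>R axis j (1::real)"
  by (auto simp: vec_eq_iff axis_def)

lemma inner_d: "i \<noteq> j \<Longrightarrow> g \<bullet> ((- 1 / a$i) *\<^sub>R axis i 1 + (1/a$j) *\<^sub>R axis j (1::real))
   = - (g$i / a$i) + g$j / a$j"
  by (simp add: inner_add_right inner_diff_right inner_axis)

lemma norm_d: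
  fixes a :: "real^'n"
  assumes "i \<noteq> j" "\<forall>s. a$s > 0"
  shows "norm ((- 1 / a$i) *\<^sub>R axis i 1 + (1/a$j) *\<^sub>R axis j (1::real)) \<le> (\<Sum>s\<in>UNIV. 1 / a$s)"
proof -
  have "norm ((- 1 / a$i) *\<^sub>R axis i 1 + (1/a$j) *\<^sub>R axis j (1::real)) \<le> 1/a$i + 1/a$j"
  proof -
    have "norm ((- 1 / a$i) *\<^sub>R axis i (1::real)) = 1/a$i" using assms(2)[rule_format, of i] by simp
    moreover have "norm ((1 / a$j) *\<^sub>R axis j (1::real)) = 1/a$j" using assms(2)[rule_format, of j] by simp
    ultimately show ?thesis by (metis norm_triangle_ineq)
  qed
  also have "\<dots> = (\<Sum>s\<in>{i,j}. 1 / a$s)" using assms by simp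
  also have "\<dots> \<le> (\<Sum>s\<in>UNIV. 1 / a$s)"
    by (rule sum_mono2) (use assms less_imp_le in auto)
  finally show ?thesis .
qed

lemma seg_in_box:
  fixes x lo up a :: "real^'n"
  assumes x: "x \<in> cbox lo up" and ij: "i \<noteq> j" and pos: "\<forall>s. a$s > 0"
    and g1: "\<gamma> \<le> a$i*(x$i-lo$i)" and g2: "\<gamma> \<le> a$j*(up$j-x$j)" and s: "0 \<le> s" "s \<le> \<gamma>"
  shows "x + s *\<^sub>R ((- 1 / a$i) *\<^sub>R axis i 1 + (1/a$j) *\<^sub>R axis j (1::real)) \<in> cbox lo up"
proof -
  have ai: "a$i > 0" and aj: "a$j > 0" using pos by auto
  have i1: "s / a$i \<le> x$i - lo$i" using g1 s ai by (simp add: pos_divide_le_eq mult.commute)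
  have j1: "s / a$j \<le> up$j - x$j" using g2 s aj by (simp add: pos_divide_le_eq mult.commute)
  have si: "s / a$i \<ge> 0" "s / a$j \<ge> 0" using s ai aj by auto
  show ?thesis
    unfolding mem_box_cart
  proof
    fix k
    show "lo $ k \<le> (x + s *\<^sub>R ((- 1 / a$i) *\<^sub>R axis i 1 + (1/a$j) *\<^sub>R axis j (1::real))) $ k \<and>
          (x + s *\<^sub>R ((- 1 / a$i) *\<^sub>R axis i 1 + (1/a$j) *\<^sub>R axis j (1::real))) $ k \<le> up $ k"
      using x[unfolded mem_box_cart, rule_format, of i] x[unfolded mem_box_cart, rule_format, of j]
        x[unfolded mem_box_cart, rule_format, of k] ij i1 j1 si
      by (cases "k = i"; cases "k = j") (auto simp: axis_def)
  qed
qed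

lemma no_inf:
  fixes F :: "real^'n \<Rightarrow> real" and G :: "real^'n \<Rightarrow> real^'n" and lo up a :: "real^'n"
    and x :: "nat \<Rightarrow> real^'n"
  assumes U: "open U" "cbox lo up \<subseteq> U" and Gc: "continuous_on U G"
    and der: "\<forall>y\<in>U. (F has_derivative (\<lambda>h. G y \<bullet> h)) (at y)"
    and pos: "\<forall>s. a$s > 0" and sig: "0<sig" "sig<1" and th: "0<th" "th<1"
    and del: "del>0" and eps: "eps>0"
    and x0: "x 0 \<in> cbox lo up"
    and steps: "\<forall>k. bcv_step F lo up a del eps sig th (x k) (x (Suc k))"
  shows False
proof -
  have gradG: "grad F y = G y" if "y \<in> U" for y
  proof -
    have "frechet_derivative F (at y) = (\<lambda>h. G y \<bullet> h)" using frechet_derivative_at der that by metis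
    thus ?thesis by (simp add: grad_def vec_eq_iff inner_axis)
  qed
  define K where "K = (\<Sum>s\<in>UNIV. 1 / a$s)"
  have Kpos: "K > 0" unfolding K_def using pos by (intro sum_pos) auto
  define e where "e = (1-sig)*del/K"
  have epos: "e>0" using sig del Kpos by (simp add: e_def)
  have eK: "e * K = (1-sig)*del" using Kpos by (simp add: e_def)
  have uc: "uniformly_continuous_on (cbox lo up) G"
    by (rule compact_uniformly_continuous[OF continuous_on_subset[OF Gc U(2)] compact_cbox])
  then obtain \<eta> where eta: "\<eta>>0" and etaP: "\<forall>y\<in>cbox lo up. \<forall>y'\<in>cbox lo up. dist y' y < \<eta> \<longrightarrow> dist (G y') (G y) < e"
    using epos unfolding uniformly_continuous_on_def by metis
  define \<eta>1 where "\<eta>1 = \<eta>/K"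
  have eta1: "\<eta>1 > 0" using eta Kpos by (simp add: \<eta>1_def)
  have key: "F (y + t *\<^sub>R d) \<le> F y + sig * t * (grad F y \<bullet> d)"
    if y: "y \<in> cbox lo up" and ij: "i\<noteq>j" and dd: "d = (- 1 / a$i) *\<^sub>R axis i 1 + (1/a$j) *\<^sub>R axis j 1"
      and hd: "grad F y $ i / a $ i - grad F y $ j / a $ j \<ge> del"
      and g1: "\<gamma> \<le> a$i*(y$i-lo$i)" and g2: "\<gamma> \<le> a$j*(up$j-y$j)" and t: "0<t" "t\<le>\<gamma>" "t<\<eta>1"
    for y i j d \<gamma> t
  proof -
    have seg: "y + s *\<^sub>R d \<in> cbox lo up" if "0\<le>s" "s\<le>t" for s
      using seg_in_box[OF y ij pos g1 g2, of s] that t dd by simp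
    have D: "((\<lambda>s. F (y + s *\<^sub>R d)) has_real_derivative (G (y + s *\<^sub>R d) \<bullet> d)) (at s)"
      if "0\<le>s" "s\<le>t" for s
    proof -
      have "(F has_derivative (\<lambda>h. G (y + s *\<^sub>R d) \<bullet> h)) (at (y + s *\<^sub>R d))"
        using der seg[OF that] U(2) by blast
      moreover have "((\<lambda>s. y + s *\<^sub>R d) has_derivative (\<lambda>h. h *\<^sub>R d)) (at s)"
        by (auto intro!: derivative_eq_intros)
      ultimately have "((\<lambda>s. F (y + s *\<^sub>R d)) has_derivative (\<lambda>h. G (y + s *\<^sub>R d) \<bullet> (h *\<^sub>R d))) (at s)"
        using has_derivative_compose[of "\<lambda>s. y + s *\<^sub>R d"] by blast
      moreover have eq: "(\<lambda>h. G (y + s *\<^sub>R d) \<bullet> (h *\<^sub>R d)) = (*) (G (y + s *\<^sub>R d) \<bullet> d)"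
        by (auto simp: fun_eq_iff)
      ultimately show ?thesis unfolding has_field_derivative_def eq[symmetric] by blast
    qed
    obtain z where z: "0<z" "z<t" and mv: "F (y + t *\<^sub>R d) - F (y + 0 *\<^sub>R d) = (t - 0) * (G (y + z *\<^sub>R d) \<bullet> d)"
      using MVT2[of 0 t "\<lambda>s. F (y + s *\<^sub>R d)" "\<lambda>s. G (y + s *\<^sub>R d) \<bullet> d"] D t(1) by auto
    have nd: "norm d \<le> K" using norm_d[OF ij pos] dd K_def by simp
    have yz: "y + z *\<^sub>R d \<in> cbox lo up" using seg z by auto
    have "dist (y + z *\<^sub>R d) y = z * norm d" using z by (simp add: dist_norm)
    also have "\<dots> \<le> t * K" using z nd by (intro mult_mono) auto
    also have "\<dots> < \<eta>" using t(3) Kpos by (simp add: \<eta>1_def pos_less_divide_eq)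
    finally have "dist (G (y + z *\<^sub>R d)) (G y) < e" using etaP yz y by blast
    hence "norm (G (y + z *\<^sub>R d) - G y) \<le> e" by (simp add: dist_norm)
    hence "norm (G (y + z *\<^sub>R d) - G y) * norm d \<le> e * K"
      using nd epos by (intro mult_mono) auto
    hence "(G (y + z *\<^sub>R d) - G y) \<bullet> d \<le> e * K"
      using norm_cauchy_schwarz[of "G (y + z *\<^sub>R d) - G y" d] by linarith
    hence c1: "G (y + z *\<^sub>R d) \<bullet> d \<le> G y \<bullet> d + (1-sig)*del" using eK by (simp add: inner_diff_left)
    have gy: "grad F y = G y" using gradG y U(2) by auto
    have gd: "G y \<bullet> d = - (G y $ i / a$i) + G y $ j / a$j" using inner_d[OF ij] dd by simp
    hence "G y \<bullet> d \<le> -del" using hd gy by simp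
    hence "(1-sig)*del \<le> (1-sig)*(-(G y \<bullet> d))" using sig by (intro mult_left_mono) auto
    hence "G (y + z *\<^sub>R d) \<bullet> d \<le> sig * (G y \<bullet> d)" using c1 by (simp add: algebra_simps)
    hence "t * (G (y + z *\<^sub>R d) \<bullet> d) \<le> t * (sig * (G y \<bullet> d))" using t(1) by (intro mult_left_mono) auto
    thus ?thesis using mv gy by (simp add: algebra_simps)
  qed
  define c where "c = min eps (th*\<eta>1)"
  have cpos: "c > 0" using eps th eta1 by (simp add: c_def)
  have step: "x' \<in> cbox lo up \<and> F x' \<le> F y - sig*del*c"
    if y: "y \<in> cbox lo up" and bs: "bcv_step F lo up a del eps sig th y x'" for y x'
  proof -
    obtain i j where ci: "y$i \<ge> lo$i + eps/a$i" and cj: "y$j \<le> up$j - eps/a$j"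
      and hd: "grad F y $ i / a $ i - grad F y $ j / a $ j \<ge> del"
      and last: "let \<gamma> = min (a $ i * (y $ i - lo $ i)) (a $ j * (up $ j - y $ j));
             d = (\<chi> s. if s = i then - 1 / a $ i else if s = j then 1 / a $ j else 0);
             m = (LEAST m::nat. F (y + (th ^ m * \<gamma>) *\<^sub>R d)
                     \<le> F y + sig * th ^ m * \<gamma> * (grad F y \<bullet> d))
         in x' = y + (th ^ m * \<gamma>) *\<^sub>R d"
      using bs unfolding bcv_step_def by blast
    define \<gamma> where "\<gamma> = min (a $ i * (y $ i - lo $ i)) (a $ j * (up $ j - y $ j))"
    define d where "d = (\<chi> s. if s = i then - 1 / a $ i else if s = j then 1 / a $ j else (0::real))"
    define P where "P = (\<lambda>m::nat. F (y + (th ^ m * \<gamma>) *\<^sub>R d) \<le> F y + sig * th ^ m * \<gamma> * (grad F y \<bullet> d))"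
    have x': "x' = y + (th ^ (LEAST m. P m) * \<gamma>) *\<^sub>R d"
      using last unfolding Let_def \<gamma>_def[symmetric] d_def[symmetric] P_def[symmetric] .
    have ij: "i \<noteq> j" using hd del by auto
    have dd: "d = (- 1 / a$i) *\<^sub>R axis i 1 + (1/a$j) *\<^sub>R axis j 1"
      unfolding d_def using d_eq[OF ij] by simp
    have ai: "a$i > 0" and aj: "a$j > 0" using pos by auto
    have "eps \<le> a$i*(y$i-lo$i)" using ci ai by (simp add: field_simps)
    moreover have "eps \<le> a$j*(up$j-y$j)" using cj aj by (simp add: field_simps)
    ultimately have geps: "eps \<le> \<gamma>" by (simp add: \<gamma>_def)
    have g1: "\<gamma> \<le> a$i*(y$i-lo$i)" and g2: "\<gamma> \<le> a$j*(up$j-y$j)" by (auto simp: \<gamma>_def)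
    have gpos: "\<gamma> > 0" using geps eps by simp
    have Pm: "P m" if "th^m*\<gamma> < \<eta>1" for m
    proof -
      have "th^m \<le> 1" using th by (simp add: power_le_one)
      hence "th^m*\<gamma> \<le> \<gamma>" using gpos by (simp add: mult_left_le_one_le)
      moreover have "0 < th^m*\<gamma>" using th gpos by simp
      ultimately show ?thesis unfolding P_def
        using key[OF y ij dd hd g1 g2, of "th^m*\<gamma>"] that by (simp add: mult.assoc)
    qed
    obtain m where "th^m < \<eta>1/\<gamma>" using real_arch_pow_inv[of "\<eta>1/\<gamma>" th] eta1 gpos th by auto
    hence "th^m*\<gamma> < \<eta>1" using gpos by (simp add: pos_less_divide_eq)
    hence "P m" by (rule Pm)
    define m0 where "m0 = (LEAST m. P m)"
    have Pm0: "P m0" unfolding m0_def using \<open>P m\<close> by (rule LeastI)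
    define lam where "lam = th^m0*\<gamma>"
    have lamc: "lam \<ge> c"
    proof (cases m0)
      case 0 thus ?thesis using geps by (simp add: lam_def c_def)
    next
      case (Suc p)
      hence "\<not> P p" unfolding m0_def using not_less_Least by (metis lessI)
      hence "th^p*\<gamma> \<ge> \<eta>1" using Pm by force
      hence "th*(th^p*\<gamma>) \<ge> th*\<eta>1" using th by (simp add: mult_left_mono)
      thus ?thesis using Suc by (simp add: lam_def c_def mult.assoc)
    qed
    have lam1: "0 \<le> lam" "lam \<le> \<gamma>" using th gpos
      by (auto simp: lam_def power_le_one mult_left_le_one_le)
    have xb: "x' \<in> cbox lo up" using seg_in_box[OF y ij pos g1 g2 lam1] x' dd
      unfolding m0_def[symmetric] lam_def[symmetric] by simp
    have gy: "grad F y = G y" using gradG y U(2) by auto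
    have "grad F y \<bullet> d \<le> -del" using inner_d[OF ij] dd hd by simp
    hence "sig * lam * (grad F y \<bullet> d) \<le> sig * lam * (-del)" using sig lam1 by (intro mult_left_mono) auto
    moreover have "F x' \<le> F y + sig * lam * (grad F y \<bullet> d)"
    proof -
      have x'l: "x' = y + lam *\<^sub>R d" using x' by (simp add: lam_def m0_def)
      have "F (y + lam *\<^sub>R d) \<le> F y + sig * lam * (grad F y \<bullet> d)"
        using Pm0 by (simp add: P_def lam_def mult.assoc)
      thus ?thesis using x'l by simp
    qed
    moreover have "sig*del*c \<le> sig*del*lam" using lamc sig del by simp
    ultimately have "F x' \<le> F y - sig*del*c" by (simp add: algebra_simps)
    thus ?thesis using xb by simp
  qed
  have all: "x k \<in> cbox lo up \<and> F (x k) \<le> F (x 0) - real k * (sig*del*c)" for k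
  proof (induction k)
    case 0 thus ?case using x0 by simp
  next
    case (Suc k)
    thus ?case using step[of "x k" "x (Suc k)"] steps by (auto simp: algebra_simps)
  qed
  have "continuous_on (cbox lo up) F"
    using der U(2) by (meson continuous_at_imp_continuous_on has_derivative_continuous subsetD)
  then obtain xm where xm: "xm \<in> cbox lo up" "\<forall>y\<in>cbox lo up. F xm \<le> F y"
    using continuous_attains_inf[OF compact_cbox] x0 by blast
  have sdc: "sig*del*c > 0" using sig del cpos by simp
  obtain k where "F (x 0) - F xm < real k * (sig*del*c)" using reals_Archimedean3[OF sdc] by blast
  moreover have "F xm \<le> F (x k)" using xm all by blast
  ultimately show False using all[of k] by simp
qed


theorem proposition4p1:
  fixes f :: "real^'n \<Rightarrow> real"
    and fl :: "nat \<Rightarrow> real^'n \<Rightarrow> real"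
    and lo up a :: "nat \<Rightarrow> real^'n"
    and \<beta> :: "nat \<Rightarrow> real"
    and lo_lim up_lim a_lim :: "real^'n"
    and \<beta>_lim :: real
    and \<sigma> \<theta> :: real
    and \<delta> \<epsilon> :: "nat \<Rightarrow> real"
  assumes A2_nonempty: "\<And>l. feas_set (lo l) (up l) (a l) (\<beta> l) \<noteq> {}"
    and A2_pos: "\<And>l i. a l $ i > 0"
    and A2_box: "\<And>l i. lo l $ i < up l $ i"
    and A2_lo: "lo \<longlonglongrightarrow> lo_lim"
    and A2_up: "up \<longlonglongrightarrow> up_lim"
    and A2_a: "a \<longlonglongrightarrow> a_lim"
    and A2_beta: "\<beta> \<longlonglongrightarrow> \<beta>_lim"
    and A3_C1: "\<And>l. \<exists>U G. open U \<and> box_set (lo l) (up l) \<subseteq> U \<and> continuous_on U G \<and>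
                     (\<forall>x\<in>U. (fl l has_derivative (\<lambda>h. G x \<bullet> h)) (at x))"
    and A3_grad: "\<And>y ybar. (\<forall>l. y l \<in> feas_set (lo l) (up l) (a l) (\<beta> l)) \<Longrightarrow>
                     y \<longlonglongrightarrow> ybar \<Longrightarrow>
                     \<exists>gbar. (\<lambda>l. grad (fl l) (y l)) \<longlonglongrightarrow> gbar \<and> gbar \<in> clarke_grad f ybar"
    and sigma: "0 < \<sigma>" "\<sigma> < 1"
    and theta: "0 < \<theta>" "\<theta> < 1"
    and delta: "\<And>l. \<delta> l > 0" "decseq \<delta>" "\<delta> \<longlonglongrightarrow> 0"
    and eps: "\<And>l. \<epsilon> l > 0" "decseq \<epsilon>" "\<epsilon> \<longlonglongrightarrow> 0"
    and stage: "l \<ge> 1"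
    and zprev: "z \<in> feas_set (lo (l - 1)) (up (l - 1)) (a (l - 1)) (\<beta> (l - 1))"
  shows "\<not> (\<exists>x :: nat \<Rightarrow> real^'n.
             x 0 = closest_point (feas_set (lo l) (up l) (a l) (\<beta> l)) z \<and>
             (\<forall>k. bcv_step (fl l) (lo l) (up l) (a l) (\<delta> l) (\<epsilon> l) \<sigma> \<theta> (x k) (x (Suc k))))"
  proof
  assume "\<exists>x :: nat \<Rightarrow> real^'n.
             x 0 = closest_point (feas_set (lo l) (up l) (a l) (\<beta> l)) z \<and>
             (\<forall>k. bcv_step (fl l) (lo l) (up l) (a l) (\<delta> l) (\<epsilon> l) \<sigma> \<theta> (x k) (x (Suc k)))"
  then obtain x :: "nat \<Rightarrow> real^'n" where
    x0: "x 0 = closest_point (feas_set (lo l) (up l) (a l) (\<beta> l)) z"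
    and st: "\<forall>k. bcv_step (fl l) (lo l) (up l) (a l) (\<delta> l) (\<epsilon> l) \<sigma> \<theta> (x k) (x (Suc k))" by blast
  obtain U G where U: "open U" "box_set (lo l) (up l) \<subseteq> U" "continuous_on U G"
    "\<forall>x\<in>U. (fl l has_derivative (\<lambda>h. G x \<bullet> h)) (at x)" using A3_C1[of l] by blast
  have "x 0 \<in> feas_set (lo l) (up l) (a l) (\<beta> l)"
    unfolding x0 by (rule closest_point_in_set[OF feas_closed A2_nonempty])
  hence xb: "x 0 \<in> cbox (lo l) (up l)" using feas_sub by blast
  show False
    by (rule no_inf[OF U(1) U(2)[unfolded box_set_cbox] U(3) U(4) _ sigma theta delta(1) eps(1) xb st])
       (use A2_pos in auto)
qed

end
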